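(* Let $a,b\in\mathbb{B}^2$ with $a\neq b$, and let $m=d(\{0\},L[a,b])$ be the Euclidean distance from the origin to the line $L[a,b]$ through $a$ and $b$. Then $$\tan\frac{v_{\mathbb{B}^2}(a,b)}{2}=\frac{\sqrt{1+m}}{\sqrt{1-m}}\,\operatorname{th}\frac{h_{\mathbb{B}^2}(a,b)}{4}.$$
   Context: $\mathbb{B}^2$ is the open unit disk in $\mathbb{C}$ and $\operatorname{th}$ is the hyperbolic tangent. For distinct $a,b\in\mathbb{B}^2$ the Hilbert metric is $h_{\mathbb{B}^2}(a,b)=\log\frac{|u-b||a-v|}{|u-a||b-v|}$, where $u,v$ are the two intersection points of the line $L[a,b]$ with the unit circle, labelled so that $|u-a|<|u-b|$; also $h_{\mathbb{B}^2}(a,a)=0$. The visual angle metric is $v_{\mathbb{B}^2}(a,b)=\sup\{\measuredangle(a,z,b): z\in\partial\mathbb{B}^2\}$, where $\measuredangle(a,z,b)$ is the angle at $z$ between the segments $[z,a]$ and $[z,b]$. *)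

theory Defs
  imports "HOL-Analysis.Analysis"
begin

definition line_through :: "complex \<Rightarrow> complex \<Rightarrow> complex set" where
  "line_through a b = {a + of_real t * (b - a) | t. True}"

definition angle_at :: "complex \<Rightarrow> complex \<Rightarrow> complex \<Rightarrow> real" where
  "angle_at a z b = arccos (((a - z) \<bullet> (b - z)) / (norm (a - z) * norm (b - z)))"

definition visual_angle :: "complex \<Rightarrow> complex \<Rightarrow> real" where
  "visual_angle a b = (SUP z \<in> sphere 0 1. angle_at a z b)"

definition hilbert_disk :: "complex \<Rightarrow> complex \<Rightarrow> real" where
  "hilbert_disk a b =
     (if a = b then 0 else
      (let (u, v) = (SOME (u, v). u \<noteq> v \<and> cmod u = 1 \<and> cmod v = 1 \<and>
                        u \<in> line_through a b \<and> v \<in> line_through a b \<and>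
                        cmod (u - a) < cmod (u - b))
       in ln ((cmod (u - b) * cmod (a - v)) / (cmod (u - a) * cmod (b - v)))))"

end

theory Submission
  imports Defs
begin


lemma cs_bound:
  fixes A B c m x y :: real
  assumes "A^2 + B^2 \<le> (c + B*m)^2" "c + B*m \<ge> 0" "x^2 + (y-m)^2 = 1"
  shows "c - A*x + B*y \<ge> 0"
proof -
  have "(A^2+B^2)*(x^2+(y-m)^2) - (-A*x + B*(y-m))^2 = (A*(y-m) + B*x)^2"
    by algebra
  hence "(-A*x + B*(y-m))^2 \<le> (A^2+B^2)*(x^2+(y-m)^2)"
    by (metis diff_ge_0_iff_ge zero_le_power2)
  also have "\<dots> \<le> (c+B*m)^2" using assms by simp
  finally have "\<bar>-A*x + B*(y-m)\<bar> \<le> c + B*m" using assms(2)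
    by (metis abs_le_square_iff abs_of_nonneg power2_abs)
  thus ?thesis by (simp add: algebra_simps abs_le_iff)
qed

lemma key_ident:
  fixes m al be s r :: real
  assumes "s^2 = 1 - m^2" "r^2 = (s^2-al^2)*(s^2-be^2)"
  shows "2*(s^2-al*be-r)*((s^2+al*be)*m + r - 2*m* s^2) = (1+m)*(1-m)^2*(be-al)^2 - (1+m)*(s^2-al*be-r)^2"
  using assms by algebra



context
  fixes m al be s r K :: real
  assumes m0: "0 \<le> m" and m1: "m < 1" and s0: "s > 0" and s2: "s^2 = 1 - m^2"
    and als: "al^2 < s^2" and bes: "be^2 < s^2" and ab: "al < be" and r0: "r \<ge> 0"
    and r2: "r^2 = (s^2-al^2)*(s^2-be^2)"
    and K_def: "K = (((s^2+al*be)*m + r)/s^2 - 2*m)/(be-al)"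
begin

lemma abs_al: "\<bar>al\<bar> < s" using als s0 by (metis abs_ge_zero power2_abs power2_less_imp_less less_le)
lemma abs_be: "\<bar>be\<bar> < s" using bes s0 by (metis abs_ge_zero power2_abs power2_less_imp_less less_le)
lemma abs_albe: "\<bar>al*be\<bar> < s^2"
proof -
  have "\<bar>al\<bar>*\<bar>be\<bar> < s* s" using abs_al abs_be by (simp add: abs_mult mult_strict_mono')
  thus ?thesis by (simp add: abs_mult power2_eq_square)
qed
lemma c_pos: "s^2 + al*be > 0" using abs_albe by (simp add: abs_less_iff)
lemma N_pos_aux: "s^2 - al*be > 0" using abs_albe by (simp add: abs_less_iff)

lemma r_le_c: "r \<le> s^2 + al*be"
proof -
  have "(s^2+al*be)^2 - r^2 = s^2*(al+be)^2" using r2 by algebra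
  hence "r^2 \<le> (s^2+al*be)^2" by (metis diff_ge_0_iff_ge zero_le_mult_iff zero_le_power2)
  thus ?thesis using c_pos by (meson less_imp_le power2_le_imp_le)
qed

lemma r_lt_N: "r < s^2 - al*be"
proof -
  have "(s^2-al*be)^2 - r^2 = s^2*(al-be)^2" using r2 by algebra
  moreover have "s^2*(al-be)^2 > 0" using s0 ab by simp
  ultimately have "r^2 < (s^2-al*be)^2" by linarith
  thus ?thesis using N_pos_aux by (meson less_imp_le power2_less_imp_less)
qed

definition "Bn = ((s^2+al*be)*m + r)/s^2"

lemma Bn_eq: "s^2 * Bn = (s^2+al*be)*m + r" using s0 by (simp add: Bn_def)
lemma Bn_nonneg: "Bn \<ge> 0" using c_pos m0 r0 s0 unfolding Bn_def by simp
lemma K_eq: "K*(be-al) = Bn - 2*m" using ab unfolding K_def Bn_def by simp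

lemma E1: "(al+be)^2 + Bn^2 = ((s^2+al*be) + Bn*m)^2"
proof -
  have "s^2*((al+be)^2 + Bn^2 - ((s^2+al*be) + Bn*m)^2) = 0"
    using Bn_eq r2 s2 by algebra
  thus ?thesis using s0 by simp
qed

lemma L_pos: "(s^2+al*be) + Bn*m > 0" using c_pos Bn_nonneg m0 by (simp add: add_pos_nonneg)

lemma A1:
  assumes "x^2 + (y-m)^2 = 1"
  shows "(al-x)*(be-x)+y^2 \<ge> K*(be-al)*\<bar>y\<bar>"
proof -
  have dot: "(al-x)*(be-x)+y^2 = (s^2+al*be) - (al+be)*x + 2*m*y"
    using assms s2 by algebra
  have Bnpart: "(s^2+al*be) - (al+be)*x + Bn*y \<ge> 0"
    by (rule cs_bound[OF _ less_imp_le[OF L_pos] assms]) (simp add: E1)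
  have By: "Bn*y = 2*m*y + K*(be-al)*y" using K_eq by (metis add.commute diff_add_cancel distrib_right)
  show ?thesis
  proof (cases "y < 0")
    case True
    thus ?thesis using dot Bnpart By by simp
  next
    case False
    show ?thesis
    proof (cases "K < 0")
      case True
      have "K*(be-al)*y \<le> 0" using True False ab by (simp add: mult_nonpos_nonneg)
      thus ?thesis using False dot Bnpart By by simp
    next
      case Kn: False
      define Bp where "Bp = 4*m - Bn"
      have Kd: "K*(be-al) \<ge> 0" using Kn ab by simp
      have "s^2*Bp - (s^2+al*be)*m \<le> r" using Kd K_eq Bn_eq s0 m0 unfolding Bp_def
        by (smt (verit) mult_left_mono zero_le_power2)
      moreover have "s^2*Bp - (s^2+al*be)*m \<ge> -r"
      proof -
        have "s^2*Bp - (s^2+al*be)*m + r = 2*m*(s^2 - al*be)" using Bn_eq unfolding Bp_def by algebra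
        moreover have "2*m*(s^2 - al*be) \<ge> 0" using m0 N_pos_aux by simp
        ultimately show ?thesis by linarith
      qed
      ultimately have sq: "(s^2*Bp - (s^2+al*be)*m)^2 \<le> r^2"
        by (metis abs_le_iff abs_le_square_iff power2_abs r0 abs_of_nonneg minus_le_iff)
      have "s^2*(((s^2+al*be) + Bp*m)^2 - (al+be)^2 - Bp^2) = r^2 - (s^2*Bp - (s^2+al*be)*m)^2"
        using r2 s2 by algebra
      hence "s^2*(((s^2+al*be) + Bp*m)^2 - (al+be)^2 - Bp^2) \<ge> 0" using sq by simp
      hence h1: "(al+be)^2 + Bp^2 \<le> ((s^2+al*be) + Bp*m)^2" using s0
        by (simp add: zero_le_mult_iff)
      have "s^2*((s^2+al*be) + Bp*m) = (s^2+al*be)* s^2 + m*(s^2*Bp)" by algebra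
      also have "\<dots> \<ge> (s^2+al*be)* s^2 + m*((s^2+al*be)*m - r)"
        using \<open>s^2*Bp - (s^2+al*be)*m \<ge> -r\<close> m0 by (smt (verit) mult_left_mono)
      also have "(s^2+al*be)* s^2 + m*((s^2+al*be)*m - r) = (s^2+al*be) - m*r" using s2 by algebra
      finally have "s^2*((s^2+al*be) + Bp*m) \<ge> (s^2+al*be) - m*r" .
      moreover have "m*r \<le> r" using m1 r0 m0 mult_right_mono[of m 1 r] by simp
      ultimately have "s^2*((s^2+al*be) + Bp*m) \<ge> 0" using r_le_c by linarith
      hence h2: "(s^2+al*be) + Bp*m \<ge> 0" using s0 by (simp add: zero_le_mult_iff)
      have "(s^2+al*be) - (al+be)*x + Bp*y \<ge> 0" by (rule cs_bound[OF h1 h2 assms])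
      moreover have "Bp*y = 2*m*y - K*(be-al)*y" using By unfolding Bp_def by (simp add: algebra_simps)
      ultimately show ?thesis using False dot by simp
    qed
  qed
qed

lemma r_pos: "r > 0"
proof -
  have "r^2 > 0" using r2 als bes by simp
  thus ?thesis using r0 by (metis less_le power_zero_numeral zero_less_numeral zero_power)
qed

lemma A2: "\<exists>x y. x^2+(y-m)^2 = 1 \<and> y < 0 \<and> (al-x)*(be-x)+y^2 = K*(be-al)*\<bar>y\<bar>"
proof -
  define L where "L = (s^2+al*be) + Bn*m"
  have L0: "L > 0" using L_pos L_def by simp
  define x0 where "x0 = (al+be)/L"
  define y0 where "y0 = m - Bn/L"
  have c1: "x0^2+(y0-m)^2 = 1"
  proof -
    have "y0 - m = -Bn/L" unfolding y0_def by simp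
    moreover have "x0^2 = (al+be)^2/L^2" unfolding x0_def by (rule power_divide)
    ultimately have "x0^2+(y0-m)^2 = ((al+be)^2 + Bn^2)/L^2" by (simp add: power_divide add_divide_distrib)
    also have "\<dots> = 1" using E1 L0 unfolding L_def by simp
    finally show ?thesis .
  qed
  have "m*L < Bn"
  proof -
    have "s^2*(Bn - m*L) = s^2*r" using Bn_eq s2 unfolding L_def by algebra
    hence "Bn - m*L = r" using s0 by simp
    thus ?thesis using r_pos by simp
  qed
  hence y0n: "y0 < 0" unfolding y0_def using L0 by (simp add: field_simps)
  have dot: "(al-x0)*(be-x0)+y0^2 = (s^2+al*be) - (al+be)*x0 + 2*m*y0"
    using c1 s2 by algebra
  have By: "Bn*y0 = 2*m*y0 + K*(be-al)*y0" using K_eq by (metis add.commute diff_add_cancel distrib_right)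
  have "(s^2+al*be) - (al+be)*x0 + Bn*y0 = L - ((al+be)^2 + Bn^2)/L"
    unfolding x0_def y0_def L_def by (simp add: diff_divide_distrib add_divide_distrib power2_eq_square algebra_simps)
  also have "(al+be)^2 + Bn^2 = L^2" using E1 L_def by simp
  also have "L - L^2/L = 0" using L0 by (simp add: power2_eq_square)
  finally have "(al-x0)*(be-x0)+y0^2 = K*(be-al)*\<bar>y0\<bar>" using dot By y0n by simp
  thus ?thesis using c1 y0n by blast
qed

lemma A3: "sqrt (1+K^2) - K = (s^2-al*be-r)/((1-m)*(be-al))"
proof -
  define N where "N = s^2-al*be-r"
  define d where "d = be - al"
  define T where "T = N/((1-m)*d)"
  have N0: "N > 0" using r_lt_N N_def by simp
  have d0: "d > 0" using ab d_def by simp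
  have T0: "T > 0" using N0 d0 m1 T_def by simp
  have ki: "2*N*(s^2*Bn - 2*m* s^2) = (1+m)*((1-m)^2*d^2 - N^2)"
    using key_ident[OF s2 r2] Bn_eq unfolding N_def d_def by (simp add: algebra_simps)
  have "2*N*(1+m)*(1-m)*(Bn - 2*m) = (1+m)*((1-m)^2*d^2 - N^2)"
    using ki s2 by algebra
  hence ki2: "2*N*(1-m)*(Bn - 2*m) = (1-m)^2*d^2 - N^2" using m0
    by (smt (verit) mult.assoc mult.commute mult_cancel_left)
  have KT: "K = (1 - T^2)/(2*T)"
  proof -
    have "K*d = Bn - 2*m" using K_eq d_def by simp
    hence "K = (Bn - 2*m)/d" using d0 by (simp add: field_simps)
    also have "\<dots> = (2*N*(1-m)*(Bn - 2*m))/(2*N*(1-m)*d)" using N0 m1 by simp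
    also have "\<dots> = ((1-m)^2*d^2 - N^2)/(2*N*(1-m)*d)" using ki2 by simp
    also have "\<dots> = (1 - T^2)/(2*T)"
    proof -
      define u where "u = (1-m)*d"
      have u0: "u > 0" using m1 d0 u_def by simp
      have "((1-m)^2*d^2 - N^2)/(2*N*(1-m)*d) = (u^2 - N^2)/(2*N*u)" unfolding u_def by (simp add: power_mult_distrib mult.assoc)
      also have "\<dots> = (1 - (N/u)^2)/(2*(N/u))" using u0 N0 by (simp add: field_simps power2_eq_square)
      finally show ?thesis unfolding T_def u_def by simp
    qed
    finally show ?thesis .
  qed
  have "1 + K^2 = ((1+T^2)/(2*T))^2" unfolding KT using T0 by (simp add: field_simps power2_eq_square)
  hence "sqrt (1+K^2) = (1+T^2)/(2*T)" using T0 by simp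
  hence "sqrt (1+K^2) - K = T" unfolding KT using T0 by (simp add: field_simps power2_eq_square)
  thus ?thesis unfolding T_def N_def d_def .
qed

end


lemma dec:
  fixes e u v :: complex and sg :: real
  assumes "cmod e = 1" "sg^2 = 1"
  shows "u \<bullet> v = (u \<bullet> e)*(v \<bullet> e) + (u \<bullet> (of_real sg*\<i>*e))*(v \<bullet> (of_real sg*\<i>*e))"
proof -
  have "(Re e)^2 + (Im e)^2 = 1" using assms(1) by (simp add: cmod_def)
  thus ?thesis using assms(2) unfolding inner_complex_def by simp algebra
qed

lemma angle_real:
  fixes al be x y K d :: real
  assumes d0: "d > 0" and na: "(al-x)^2 + y^2 > 0" and nb: "(be-x)^2+y^2 > 0"
    and dd: "d = be - al"
    and ge: "(al-x)*(be-x)+y^2 \<ge> K*d*\<bar>y\<bar>"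
  shows "arccos (((al-x)*(be-x)+y^2) / (sqrt ((al-x)^2 + y^2) * sqrt ((be-x)^2+y^2)))
           \<le> arccos (K / sqrt (1+K^2))"
    and "(al-x)*(be-x)+y^2 = K*d*\<bar>y\<bar> \<Longrightarrow> y \<noteq> 0 \<Longrightarrow>
         arccos (((al-x)*(be-x)+y^2) / (sqrt ((al-x)^2 + y^2) * sqrt ((be-x)^2+y^2)))
           = arccos (K / sqrt (1+K^2))"
proof -
  define P where "P = sqrt ((al-x)^2 + y^2) * sqrt ((be-x)^2+y^2)"
  define dot where "dot = (al-x)*(be-x)+y^2"
  define W where "W = sqrt (1+K^2)"
  have P0: "P > 0" unfolding P_def using na nb by simp
  have W0: "W > 0" unfolding W_def by (simp add: add_pos_nonneg)
  have W2: "W^2 = 1+K^2" unfolding W_def by (simp add: add_nonneg_nonneg)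
  have lag: "dot^2 + (\<bar>y\<bar>*d)^2 = P^2"
  proof -
    have "P^2 = ((al-x)^2 + y^2)*((be-x)^2+y^2)" unfolding P_def using na nb
      by (simp add: power_mult_distrib)
    also have "\<dots> = dot^2 + (\<bar>y\<bar>*d)^2" unfolding dot_def dd by (simp add: power_mult_distrib) algebra
    finally show ?thesis by simp
  qed
  define c1 where "c1 = dot/P"
  define q1 where "q1 = \<bar>y\<bar>*d/P"
  have cs: "c1^2 + q1^2 = 1" using lag P0 unfolding c1_def q1_def by (simp add: power_divide add_divide_distrib[symmetric])
  have q10: "q1 \<ge> 0" unfolding q1_def using d0 P0 by simp
  have ge1: "c1 \<ge> K*q1" using ge P0 unfolding c1_def q1_def dot_def by (simp add: field_simps)
  have "K^2 < W^2" using W2 by simp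
  hence KW: "\<bar>K\<bar> < W" using power2_less_imp_less[of "\<bar>K\<bar>" W] W0 by simp
  have "c1^2 \<le> 1" using cs by (metis le_add_same_cancel1 zero_le_power2)
  hence c1b: "-1 \<le> c1 \<and> c1 \<le> 1" by (simp add: abs_square_le_1 abs_le_iff)
  have id: "W^2*c1^2 - K^2 = (c1 - K*q1)*(c1 + K*q1)" using W2 cs by algebra
  have main: "c1 \<ge> K/W"
  proof (cases "c1 \<ge> 0")
    case True
    show ?thesis
    proof (cases "K \<le> 0")
      case True hence "K/W \<le> 0" using W0 by (simp add: divide_nonpos_pos)
      thus ?thesis using \<open>c1 \<ge> 0\<close> by linarith
    next
      case False
      have "c1 + K*q1 \<ge> 0" using False q10 \<open>c1\<ge>0\<close> by simp
      hence "(c1 - K*q1)*(c1 + K*q1) \<ge> 0" using ge1 by simp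
      hence "W^2*c1^2 \<ge> K^2" using id by linarith
      hence "(W*c1)^2 \<ge> K^2" by (simp add: power_mult_distrib)
      hence "W*c1 \<ge> K" using W0 True by (meson power2_le_imp_le mult_nonneg_nonneg less_imp_le)
      thus ?thesis using W0 by (simp add: field_simps)
    qed
  next
    case False
    hence "K*q1 < 0" using ge1 by simp
    hence "c1 + K*q1 < 0" using False by simp
    hence "(c1 - K*q1)*(c1 + K*q1) \<le> 0" using ge1 by (simp add: mult_nonneg_nonpos)
    hence "W^2*c1^2 \<le> K^2" using id by linarith
    hence "(W*c1)^2 \<le> K^2" by (simp add: power_mult_distrib)
    hence "\<bar>W*c1\<bar> \<le> \<bar>K\<bar>" by (simp add: abs_le_square_iff)
    moreover have "K < 0" using \<open>K*q1<0\<close> q10 by (metis mult_nonneg_nonneg not_le)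
    ultimately have "W*c1 \<ge> K" by linarith
    thus ?thesis using W0 by (simp add: field_simps)
  qed
  have KWb: "-1 \<le> K/W \<and> K/W \<le> 1" using KW W0 by (simp add: abs_less_iff field_simps)
  show "arccos (((al-x)*(be-x)+y^2) / (sqrt ((al-x)^2 + y^2) * sqrt ((be-x)^2+y^2)))
           \<le> arccos (K / sqrt (1+K^2))"
    using arccos_le_arccos[of "K/W" c1] main c1b KWb unfolding c1_def dot_def P_def W_def by simp
  assume eq: "(al-x)*(be-x)+y^2 = K*d*\<bar>y\<bar>" and y0: "y \<noteq> 0"
  have "c1 = K*q1" using eq unfolding c1_def q1_def dot_def by simp
  moreover have "q1 > 0" unfolding q1_def using y0 d0 P0 by simp
  ultimately have "q1^2*W^2 = 1" using cs W2 by algebra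
  hence "(q1*W)^2 = 1^2" by (simp add: power_mult_distrib)
  hence "q1*W = 1" using \<open>q1>0\<close> W0 by (metis power2_eq_imp_eq mult_pos_pos less_imp_le zero_le_one)
  hence "q1 = 1/W" using W0 by (simp add: field_simps)
  hence "c1 = K/W" using \<open>c1 = K*q1\<close> by simp
  thus "arccos (((al-x)*(be-x)+y^2) / (sqrt ((al-x)^2 + y^2) * sqrt ((be-x)^2+y^2)))
           = arccos (K / sqrt (1+K^2))" unfolding c1_def dot_def P_def W_def by simp
qed

lemma tan_arccos:
  fixes K :: real
  shows "tan (arccos (K / sqrt (1+K^2)) / 2) = sqrt (1+K^2) - K"
proof -
  define W where "W = sqrt (1+K^2)"
  have W0: "W > 0" unfolding W_def by (simp add: add_pos_nonneg)
  have W2: "W^2 = 1+K^2" unfolding W_def by (simp add: add_nonneg_nonneg)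
  have "K^2 < W^2" using W2 by simp
  hence KW: "\<bar>K\<bar> < W" using power2_less_imp_less[of "\<bar>K\<bar>" W] W0 by simp
  have KWb: "-1 \<le> K/W \<and> K/W \<le> 1" using KW W0 by (simp add: abs_less_iff field_simps)
  have "sin (arccos (K/W)) = sqrt (1 - (K/W)^2)" by (rule sin_arccos) (use KWb in auto)
  also have "1 - (K/W)^2 = (1/W)^2"
  proof -
    have "1 - (K/W)^2 = (W^2 - K^2)/W^2" using W0 by (simp add: power_divide diff_divide_distrib)
    also have "\<dots> = 1/W^2" using W2 by simp
    finally show ?thesis by (simp add: power_divide)
  qed
  finally have q1: "sin (arccos (K/W)) = 1/W" using W0 by simp
  have cs: "cos (arccos (K/W)) = K/W" using KWb by simp
  have "tan (arccos (K/W) / 2) = sin (arccos (K/W)) / (cos (arccos (K/W)) + 1)"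
    using tan_half[of "arccos (K/W) / 2"] by simp
  also have "\<dots> = 1/(K + W)" unfolding q1 cs using W0 KW by (simp add: field_simps)
  also have "\<dots> = W - K"
  proof -
    have "(W - K)*(W+K) = 1" using W2 by algebra
    moreover have "W + K > 0" using KW by linarith
    ultimately show ?thesis by (simp add: field_simps)
  qed
  finally show ?thesis unfolding W_def .
qed

lemma tanh_part:
  fixes s al be :: real
  assumes s0: "s > 0" and als: "\<bar>al\<bar> < s" and bes: "\<bar>be\<bar> < s" and ab: "al < be"
  shows "tanh (ln (((s+be)*(s-al))/((s+al)*(s-be))) / 4) = (s^2-al*be - sqrt ((s^2-al^2)*(s^2-be^2)))/(s*(be-al))"
proof -
  define P where "P = (s+be)*(s-al)"
  define Q where "Q = (s+al)*(s-be)"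
  have P0: "P > 0" unfolding P_def using als bes by (simp add: abs_less_iff)
  have Q0: "Q > 0" unfolding Q_def using als bes by (simp add: abs_less_iff)
  define h where "h = ln (P/Q)"
  have eh: "exp h = P/Q" unfolding h_def using P0 Q0 by simp
  have "exp (h/2)^2 = exp h" by (simp add: power2_eq_square exp_add[symmetric])
  hence e2: "exp (h/2) = sqrt P / sqrt Q" using eh by (metis real_sqrt_divide real_sqrt_unique exp_ge_zero)
  define p where "p = sqrt P"
  define q where "q = sqrt Q"
  have p0: "p > 0" "q > 0" unfolding p_def q_def using P0 Q0 by auto
  have pq2: "p^2 = P" "q^2 = Q" unfolding p_def q_def using P0 Q0 by auto
  have r: "sqrt ((s^2-al^2)*(s^2-be^2)) = p*q"
  proof -
    have "(s^2-al^2)*(s^2-be^2) = P*Q" unfolding P_def Q_def by algebra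
    thus ?thesis unfolding p_def q_def by (simp add: real_sqrt_mult)
  qed
  have "tanh (h/4) = (1 - exp (-2*(h/4)))/(1 + exp (-2*(h/4)))" by (rule tanh_real_altdef)
  also have "exp (-2*(h/4)) = inverse (exp (h/2))" by (simp add: exp_minus[symmetric])
  also have "\<dots> = q/p" unfolding e2 p_def q_def by simp
  also have "(1 - q/p)/(1 + q/p) = (p - q)/(p+q)"
  proof -
    have a1: "1 - q/p = (p-q)/p" "1 + q/p = (p+q)/p" using p0 by (simp_all add: diff_divide_distrib add_divide_distrib)
    show ?thesis unfolding a1 using p0 by simp
  qed
  also have "\<dots> = (s^2-al*be - p*q)/(s*(be-al))"
  proof -
    have "(p - q)*(s*(be-al)) = (s^2-al*be - p*q)*(p+q)" using pq2 unfolding P_def Q_def by algebra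
    moreover have "s*(be-al) > 0" using s0 ab by simp
    moreover have "p + q > 0" using p0 by simp
    ultimately show ?thesis using frac_eq_eq[of "p+q" "s*(be-al)" "p-q" "s^2-al*be - p*q"] s0 ab by (simp add: mult.commute)
  qed
  finally show ?thesis unfolding h_def P_def Q_def r .
qed



theorem theorem1p1:
  fixes a b :: complex
  assumes "a \<in> ball 0 1" and "b \<in> ball 0 1" and "a \<noteq> b"
  defines "m \<equiv> infdist 0 (line_through a b)"
  shows "tan (visual_angle a b / 2) =
           sqrt (1 + m) / sqrt (1 - m) * tanh (hilbert_disk a b / 4)"
proof -
  have a1: "cmod a < 1" and b1: "cmod b < 1" using assms(1,2) by auto
  define d where "d = cmod (b - a)"
  have d0: "d > 0" using assms(3) d_def by simp
  define e where "e = (b - a) / of_real d"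
  have e1: "cmod e = 1" unfolding e_def d_def using assms(3) by (simp add: norm_divide)
  have bae: "b - a = d *\<^sub>R e" unfolding e_def using d0 by (simp add: scaleR_conv_of_real)
  define mu0 where "mu0 = a \<bullet> (\<i>*e)"
  define sg :: real where "sg = (if mu0 \<le> 0 then 1 else -1)"
  have sg2: "sg^2 = 1" unfolding sg_def by simp
  define n where "n = of_real sg * \<i> * e"
  have D: "\<And>u v. u \<bullet> v = (u\<bullet>e)*(v\<bullet>e) + (u\<bullet>n)*(v\<bullet>n)" unfolding n_def by (rule dec[OF e1 sg2])
  have ee: "e \<bullet> e = 1" using power2_norm_eq_inner[of e] e1 by simp
  have ncm: "cmod n = 1" unfolding n_def using e1 sg2 by (simp add: norm_mult abs_square_eq_1)
  have nn: "n \<bullet> n = 1" using ncm power2_norm_eq_inner[of n] by simp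
  have en: "e \<bullet> n = 0" unfolding n_def inner_complex_def by (simp add: algebra_simps)
  define mu where "mu = a \<bullet> n"
  have mu_le: "mu \<le> 0"
  proof -
    have "mu = sg * mu0" unfolding mu_def n_def mu0_def inner_complex_def by (simp add: algebra_simps)
    thus ?thesis unfolding sg_def by auto
  qed
  define mm where "mm = - mu"
  define al where "al = a \<bullet> e"
  define be where "be = b \<bullet> e"
  have bn: "b \<bullet> n = mu"
  proof -
    have "b \<bullet> n = a \<bullet> n + (b - a) \<bullet> n" by (simp add: inner_diff_left)
    thus ?thesis unfolding bae mu_def using en by simp
  qed
  have abd: "be - al = d"
  proof -
    have "be - al = (b - a) \<bullet> e" unfolding al_def be_def by (simp add: inner_diff_left)
    thus ?thesis unfolding bae using ee by simp
  qed
  have NRM: "\<And>z. (cmod z)^2 = (z\<bullet>e)^2 + (z\<bullet>n)^2"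
  proof -
    fix z
    have "(cmod z)^2 = z \<bullet> z" by (rule power2_norm_eq_inner)
    also have "\<dots> = (z\<bullet>e)*(z\<bullet>e) + (z\<bullet>n)*(z\<bullet>n)" by (rule D)
    finally show "(cmod z)^2 = (z\<bullet>e)^2 + (z\<bullet>n)^2" by (simp add: power2_eq_square)
  qed
  have eq0: "\<And>w. w\<bullet>e = 0 \<Longrightarrow> w\<bullet>n = 0 \<Longrightarrow> w = 0"
  proof -
    fix w assume "w\<bullet>e = 0" "w\<bullet>n = 0"
    hence "(cmod w)^2 = 0" using NRM by simp
    thus "w = 0" by simp
  qed
  have aa: "(cmod a)^2 = al^2 + mm^2" using NRM[of a] unfolding al_def mm_def mu_def by simp
  have bb: "(cmod b)^2 = be^2 + mm^2" using NRM[of b] bn unfolding be_def mm_def by simp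
  have mm0: "0 \<le> mm" using mu_le mm_def by simp
  have "(cmod a)^2 < 1^2" by (rule power_strict_mono[OF a1 norm_ge_zero]) simp
  hence al2: "al^2 + mm^2 < 1" using aa by simp
  have "(cmod b)^2 < 1^2" by (rule power_strict_mono[OF b1 norm_ge_zero]) simp
  hence be2: "be^2 + mm^2 < 1" using bb by simp
  have "mm^2 < 1" using al2 zero_le_power2[of al] by linarith
  hence mm1: "mm < 1" using power2_less_imp_less[of mm 1] by simp
  define s where "s = sqrt (1 - mm^2)"
  have s2: "s^2 = 1 - mm^2" unfolding s_def using \<open>mm^2 < 1\<close> by simp
  have s0: "s > 0" unfolding s_def using \<open>mm^2 < 1\<close> by simp
  have als: "al^2 < s^2" using al2 s2 by simp
  have bes: "be^2 < s^2" using be2 s2 by simp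
  have ab: "al < be" using abd d0 by simp
  define r where "r = sqrt ((s^2-al^2)*(s^2-be^2))"
  have r0: "r \<ge> 0" unfolding r_def using als bes by simp
  have r2: "r^2 = (s^2-al^2)*(s^2-be^2)" unfolding r_def using als bes by simp
  define K where "K = (((s^2+al*be)*mm + r)/s^2 - 2*mm)/(be-al)"
  note ctx = mm0 mm1 s0 s2 als bes ab r0 r2 K_def

  have Lmem: "\<And>z. z \<in> line_through a b \<longleftrightarrow> z \<bullet> n = mu"
  proof
    fix z assume "z \<in> line_through a b"
    then obtain t where "z = a + of_real t * (b - a)" unfolding line_through_def by auto
    hence "z = a + (t*d) *\<^sub>R e" unfolding bae by (simp add: scaleR_conv_of_real)
    thus "z \<bullet> n = mu" unfolding mu_def using en by (simp add: inner_add_left)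
  next
    fix z assume zn: "z \<bullet> n = mu"
    define t where "t = (z \<bullet> e - al)/d"
    have "z - (a + of_real t * (b - a)) = 0"
    proof (rule eq0)
      have w: "z - (a + of_real t * (b - a)) = z - a - (t*d) *\<^sub>R e" unfolding bae by (simp add: scaleR_conv_of_real)
      show "(z - (a + of_real t * (b - a))) \<bullet> e = 0" unfolding w using ee d0
        by (simp add: inner_diff_left al_def[symmetric] t_def)
      show "(z - (a + of_real t * (b - a))) \<bullet> n = 0" unfolding w using en zn
        by (simp add: inner_diff_left mu_def)
    qed
    thus "z \<in> line_through a b" unfolding line_through_def by auto
  qed
  have NL: "\<And>z w. z \<bullet> n = mu \<Longrightarrow> w \<bullet> n = mu \<Longrightarrow> cmod (z - w) = \<bar>z\<bullet>e - w\<bullet>e\<bar>"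
  proof -
    fix z w assume "z \<bullet> n = mu" "w \<bullet> n = mu"
    hence "(cmod (z - w))^2 = (z\<bullet>e - w\<bullet>e)^2" using NRM[of "z-w"] by (simp add: inner_diff_left)
    thus "cmod (z - w) = \<bar>z\<bullet>e - w\<bullet>e\<bar>" by (metis norm_ge_zero power2_abs abs_of_nonneg power2_eq_imp_eq abs_ge_zero)
  qed

  have m_eq: "m = mm"
  proof -
    define p0 where "p0 = mu *\<^sub>R n"
    have p0n: "p0 \<bullet> n = mu" unfolding p0_def using nn by simp
    have p0L: "p0 \<in> line_through a b" using Lmem p0n by simp
    have "cmod p0 = mm" unfolding p0_def mm_def using ncm mu_le by simp
    hence le: "m \<le> mm" unfolding m_def using infdist_le[OF p0L, of 0] by simp
    have ne: "line_through a b \<noteq> {}" using p0L by auto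
    have "mm \<le> infdist 0 (line_through a b)"
      unfolding infdist_notempty[OF ne]
    proof (rule cINF_greatest)
      show "line_through a b \<noteq> {}" using p0L by auto
      fix z assume "z \<in> line_through a b"
      hence "z \<bullet> n = mu" using Lmem by simp
      hence "(cmod z)^2 \<ge> mm^2" using NRM[of z] mm_def by simp
      hence "cmod z \<ge> mm" using mm0 by (meson norm_ge_zero power2_le_imp_le)
      thus "mm \<le> dist 0 z" by simp
    qed
    thus ?thesis using le m_def by simp
  qed
  have ne_: "n \<bullet> e = 0" using en by (simp add: inner_commute)
  have d0': "be - al > 0" using ab by simp
  have AF: "\<And>z. cmod z = 1 \<Longrightarrow> angle_at a z b = arccos (((al - z\<bullet>e)*(be - z\<bullet>e) + (z\<bullet>n - mu)^2) /
        (sqrt ((al - z\<bullet>e)^2 + (z\<bullet>n-mu)^2) * sqrt ((be - z\<bullet>e)^2 + (z\<bullet>n-mu)^2)))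
      \<and> (z\<bullet>e)^2 + ((z\<bullet>n - mu) - mm)^2 = 1
      \<and> (al - z\<bullet>e)^2 + (z\<bullet>n-mu)^2 > 0 \<and> (be - z\<bullet>e)^2 + (z\<bullet>n-mu)^2 > 0"
  proof -
    fix z :: complex assume z1: "cmod z = 1"
    have dot: "(a - z) \<bullet> (b - z) = (al - z\<bullet>e)*(be - z\<bullet>e) + (z\<bullet>n - mu)^2"
      using D[of "a-z" "b-z"] bn unfolding al_def be_def mu_def by (simp add: inner_diff_left power2_eq_square algebra_simps)
    have na: "(cmod (a - z))^2 = (al - z\<bullet>e)^2 + (z\<bullet>n-mu)^2"
      using NRM[of "a-z"] unfolding al_def mu_def by (simp add: inner_diff_left power2_commute)
    have nb: "(cmod (b - z))^2 = (be - z\<bullet>e)^2 + (z\<bullet>n-mu)^2"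
      using NRM[of "b-z"] bn unfolding be_def by (simp add: inner_diff_left power2_commute)
    have "a \<noteq> z" using a1 z1 by auto
    hence pa: "(cmod (a - z))^2 > 0" by simp
    have "b \<noteq> z" using b1 z1 by auto
    hence pb: "(cmod (b - z))^2 > 0" by simp
    have "1 = (z\<bullet>e)^2 + (z\<bullet>n)^2" using NRM[of z] z1 by simp
    hence circ: "(z\<bullet>e)^2 + ((z\<bullet>n - mu) - mm)^2 = 1" unfolding mm_def by simp
    have "cmod (a - z) = sqrt ((al - z\<bullet>e)^2 + (z\<bullet>n-mu)^2)" using na by (metis norm_ge_zero real_sqrt_unique)
    moreover have "cmod (b - z) = sqrt ((be - z\<bullet>e)^2 + (z\<bullet>n-mu)^2)" using nb by (metis norm_ge_zero real_sqrt_unique)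
    ultimately show "?thesis z" unfolding angle_at_def dot using circ pa pb na nb by simp
  qed
  define v0 where "v0 = arccos (K / sqrt (1+K^2))"
  have UB: "\<And>z. cmod z = 1 \<Longrightarrow> angle_at a z b \<le> v0"
  proof -
    fix z :: complex assume z1: "cmod z = 1"
    note af = AF[OF z1]
    have ge: "(al - z\<bullet>e)*(be - z\<bullet>e) + (z\<bullet>n - mu)^2 \<ge> K*(be-al)*\<bar>z\<bullet>n - mu\<bar>"
      using A1[OF ctx, of "z\<bullet>e" "z\<bullet>n - mu"] af by (simp add: algebra_simps)
    show "angle_at a z b \<le> v0" unfolding v0_def
      using angle_real(1)[OF d0' _ _ refl ge] af by simp
  qed
  obtain x0 y0 where xy0: "x0^2+(y0-mm)^2 = 1" "y0 < 0" "(al-x0)*(be-x0)+y0^2 = K*(be-al)*\<bar>y0\<bar>"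
    using A2[OF ctx] by blast
  define z0 where "z0 = x0 *\<^sub>R e + (y0 + mu) *\<^sub>R n"
  have z0e: "z0 \<bullet> e = x0" unfolding z0_def using ee ne_ by (simp add: inner_add_left)
  have z0n: "z0 \<bullet> n = y0 + mu" unfolding z0_def using nn en by (simp add: inner_add_left)
  have z01: "cmod z0 = 1"
  proof -
    have "(cmod z0)^2 = 1" using NRM[of z0] z0e z0n xy0(1) unfolding mm_def by simp
    thus ?thesis by (simp add: abs_square_eq_1)
  qed
  have EQ: "angle_at a z0 b = v0"
  proof -
    note af = AF[OF z01]
    have eq: "(al - z0\<bullet>e)*(be - z0\<bullet>e) + (z0\<bullet>n - mu)^2 = K*(be-al)*\<bar>z0\<bullet>n - mu\<bar>"
      using xy0(3) z0e z0n by simp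
    have yne: "z0\<bullet>n - mu \<noteq> 0" using z0n xy0(2) by simp
    have ge: "(al - z0\<bullet>e)*(be - z0\<bullet>e) + (z0\<bullet>n - mu)^2 \<ge> K*(be-al)*\<bar>z0\<bullet>n - mu\<bar>"
      using eq by simp
    show ?thesis unfolding v0_def
      using angle_real(2)[OF d0' _ _ refl ge eq yne] af by simp
  qed
  have VA: "visual_angle a b = v0"
    unfolding visual_angle_def
  proof (rule cSup_eq_maximum)
    show "v0 \<in> (\<lambda>z. angle_at a z b) ` sphere 0 1" using EQ z01 by (metis image_eqI mem_sphere_0)
    fix x assume "x \<in> (\<lambda>z. angle_at a z b) ` sphere 0 1"
    thus "x \<le> v0" using UB by auto
  qed
  have LHS: "tan (visual_angle a b / 2) = (s^2-al*be-r)/((1-mm)*(be-al))"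
    unfolding VA v0_def tan_arccos using A3[OF ctx] .
  have alabs: "\<bar>al\<bar> < s" using power2_less_imp_less[of "\<bar>al\<bar>" s] als s0 by simp
  have beabs: "\<bar>be\<bar> < s" using power2_less_imp_less[of "\<bar>be\<bar>" s] bes s0 by simp
  define u0 where "u0 = (-s) *\<^sub>R e + mu *\<^sub>R n"
  define v1 where "v1 = s *\<^sub>R e + mu *\<^sub>R n"
  have u0e: "u0 \<bullet> e = -s" "u0 \<bullet> n = mu" unfolding u0_def using ee ne_ nn en by (simp_all add: inner_add_left inner_diff_left)
  have v1e: "v1 \<bullet> e = s" "v1 \<bullet> n = mu" unfolding v1_def using ee ne_ nn en by (simp_all add: inner_add_left)
  have an: "a \<bullet> n = mu" unfolding mu_def ..
  have unit: "\<And>z. z \<bullet> n = mu \<Longrightarrow> cmod z = 1 \<longleftrightarrow> z \<bullet> e = s \<or> z \<bullet> e = -s"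
  proof -
    fix z assume zn: "z \<bullet> n = mu"
    have "cmod z = 1 \<longleftrightarrow> (cmod z)^2 = 1" by (simp add: abs_square_eq_1)
    also have "\<dots> \<longleftrightarrow> (z\<bullet>e)^2 = s^2" using NRM[of z] zn s2 unfolding mm_def by auto
    also have "\<dots> \<longleftrightarrow> z \<bullet> e = s \<or> z \<bullet> e = -s" by (rule power2_eq_iff)
    finally show "cmod z = 1 \<longleftrightarrow> z \<bullet> e = s \<or> z \<bullet> e = -s" .
  qed
  have pts: "\<And>z w. z\<bullet>n = mu \<Longrightarrow> w\<bullet>n = mu \<Longrightarrow> z\<bullet>e = w\<bullet>e \<Longrightarrow> z = w"
  proof -
    fix z w assume "z\<bullet>n = mu" "w\<bullet>n = mu" "z\<bullet>e = w\<bullet>e"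
    hence "z - w = 0" by (intro eq0) (simp_all add: inner_diff_left)
    thus "z = w" by simp
  qed
  have n_u0b: "cmod (u0 - b) = s + be" using NL[OF u0e(2) bn] u0e beabs unfolding be_def by simp
  have n_av1: "cmod (a - v1) = s - al" using NL[OF an v1e(2)] v1e alabs unfolding al_def by simp
  have n_u0a: "cmod (u0 - a) = s + al" using NL[OF u0e(2) an] u0e alabs unfolding al_def by simp
  have n_bv1: "cmod (b - v1) = s - be" using NL[OF bn v1e(2)] v1e beabs unfolding be_def by simp
  have SM: "(SOME (u, v). u \<noteq> v \<and> cmod u = 1 \<and> cmod v = 1 \<and>
                        u \<in> line_through a b \<and> v \<in> line_through a b \<and>
                        cmod (u - a) < cmod (u - b)) = (u0, v1)"
  proof (rule some_equality)
    have "u0 \<noteq> v1" using u0e v1e s0 by auto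
    moreover have "cmod u0 = 1" "cmod v1 = 1" using unit u0e v1e by auto
    moreover have "u0 \<in> line_through a b" "v1 \<in> line_through a b" using Lmem u0e v1e by auto
    moreover have "cmod (u0 - a) < cmod (u0 - b)" using n_u0a n_u0b ab by simp
    ultimately show "case (u0, v1) of (u, v) \<Rightarrow> u \<noteq> v \<and> cmod u = 1 \<and> cmod v = 1 \<and>
                        u \<in> line_through a b \<and> v \<in> line_through a b \<and>
                        cmod (u - a) < cmod (u - b)" by simp
  next
    fix p assume "case p of (u, v) \<Rightarrow> u \<noteq> v \<and> cmod u = 1 \<and> cmod v = 1 \<and>
                        u \<in> line_through a b \<and> v \<in> line_through a b \<and>
                        cmod (u - a) < cmod (u - b)"
    then obtain u v where p: "p = (u, v)" and Q: "u \<noteq> v" "cmod u = 1" "cmod v = 1"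
       "u \<in> line_through a b" "v \<in> line_through a b" "cmod (u - a) < cmod (u - b)"
      by (cases p) auto
    have un: "u \<bullet> n = mu" and vn: "v \<bullet> n = mu" using Q Lmem by auto
    have "u \<bullet> e = -s"
    proof (rule ccontr)
      assume "u \<bullet> e \<noteq> -s"
      hence "u \<bullet> e = s" using unit[OF un] Q by auto
      hence "cmod (u - a) = s - al" "cmod (u - b) = s - be"
        using NL[OF un an] NL[OF un bn] alabs beabs unfolding al_def be_def by auto
      thus False using Q(6) ab by simp
    qed
    hence uu: "u = u0" using pts[OF un u0e(2)] u0e by simp
    have "v \<bullet> e = s"
    proof (rule ccontr)
      assume "v \<bullet> e \<noteq> s"
      hence "v \<bullet> e = -s" using unit[OF vn] Q by auto
      hence "v = u0" using pts[OF vn u0e(2)] u0e by simp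
      thus False using Q(1) uu by simp
    qed
    hence "v = v1" using pts[OF vn v1e(2)] v1e by simp
    thus "p = (u0, v1)" using p uu by simp
  qed
  have HD: "hilbert_disk a b = ln (((s+be)*(s-al))/((s+al)*(s-be)))"
    unfolding hilbert_disk_def SM using assms(3) n_u0b n_av1 n_u0a n_bv1 by simp
  have RHS: "tanh (hilbert_disk a b / 4) = (s^2-al*be-r)/(s*(be-al))"
    unfolding HD r_def by (rule tanh_part[OF s0 alabs beabs ab])
  have sq: "s = sqrt (1-mm) * sqrt (1+mm)" unfolding s_def
    by (simp add: real_sqrt_mult[symmetric] power2_eq_square algebra_simps)
  have q0: "sqrt (1-mm) > 0" "sqrt (1+mm) > 0" using mm1 mm0 by auto
  have qq: "sqrt (1-mm) * sqrt (1-mm) = 1 - mm" using mm1 by simp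
  have fin: "\<And>p q dd w N::real. p > 0 \<Longrightarrow> q > 0 \<Longrightarrow> dd > 0 \<Longrightarrow> q*q = w \<Longrightarrow>
      N/(w*dd) = p/q * (N/((q*p)*dd))"
    by (simp add: field_simps)
  have "(s^2-al*be-r)/((1-mm)*(be-al)) = sqrt (1+mm) / sqrt (1-mm) * ((s^2-al*be-r)/(s*(be-al)))"
    unfolding sq[symmetric] using fin[OF q0(2) q0(1) d0' qq, of "s^2-al*be-r"] sq by simp
  thus ?thesis unfolding LHS RHS m_eq .
qed

end
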